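(* Let $s,t\in\mathbb N$. If $s>t$ then $\hom_{\Bbbk\mathbf{FA}}(\overline P^{\otimes s},\overline P^{\otimes t})=0$. If $s=t$, the place-permutation action of $\mathfrak S_t$ on $\overline P^{\otimes t}$ induces an isomorphism of $\Bbbk$-algebras $\Bbbk\mathfrak S_t\cong\mathrm{End}_{\Bbbk\mathbf{FA}}(\overline P^{\otimes t})$.
   Context: Let $\Bbbk$ be a field. $\mathbf{FA}$ denotes the category of finite sets and all maps, and $\mathbf{FI}$, $\mathbf{FS}$, $\mathbf{FB}$ its wide subcategories of injections, surjections and bijections respectively; $\mathbf n=\{1,\dots,n\}$ for $n\in\mathbb N$ ($\mathbf 0=\emptyset$), and $\mathfrak S_n$ is the symmetric group. For a category $\mathcal C$, $\Bbbk\mathcal C(X,Y)$ is the $\Bbbk$-vector space with basis $\mathcal C(X,Y)$. A $\Bbbk\mathbf{FA}$-module is a functor from $\mathbf{FA}$ to $\Bbbk$-vector spaces (these form the abelian category $\mathcal F(\mathbf{FA})$); $\otimes$ denotes the pointwise tensor product over $\Bbbk$, and $\hom_{\Bbbk\mathbf{FA}}$ denotes natural transformations. $P^{\mathbf{FA}}_{\mathbf n}:=\Bbbk\mathbf{FA}(\mathbf n,-)$, so $P^{\mathbf{FA}}_{\mathbf n}(X)\cong\Bbbk[X]^{\otimes n}$ (where $\Bbbk[X]$ has basis $\{[x]:x\in X\}$), with the right $\mathfrak S_n$-action by precomposition, equivalently place permutation of tensor factors; write $P^{\mathbf{FA}}:=P^{\mathbf{FA}}_{\mathbf 1}$. Let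 $\overline{\Bbbk}$ be the functor with value $\Bbbk$ on non-empty sets (all maps acting by the identity) and $0$ on $\emptyset$, and $\Bbbk_{\mathbf 0}$ the functor with value $\Bbbk$ on $\emptyset$ and $0$ on non-empty sets. $\overline P$ is the kernel of the surjection $P^{\mathbf{FA}}\to\overline\Bbbk$, $[x]\mapsto 1$; thus $\overline P(X)=\{\sum_x a_x[x]:\sum_x a_x=0\}$. For $n\ge1$, $\overline P^{\otimes n}$ is the $n$-fold pointwise tensor power, a subfunctor of $P^{\mathbf{FA}}_{\mathbf n}$ stable under the place-permutation right action of $\mathfrak S_n$; by convention $\overline P^{\otimes 0}:=\overline\Bbbk$. *)

theory Defs
  imports "HOL-Combinatorics.Permutations"
begin

(* Skeleton of FA: objects n = {0..<n}; a map n -> m is f :: nat => nat with f ` {..<n} <= {..<m}.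
   An element of P_s(n) = k[n]^{(x)s} is a function on s-tuples (lists of length s with entries < n);
   the basis tensor [x1] (x) ... (x) [xs] corresponds to the list [x1,...,xs]. *)

definition Pbar :: "nat \<Rightarrow> (nat \<Rightarrow> 'k::field) set" where
  "Pbar n = {a. (\<forall>x\<ge>n. a x = 0) \<and> (\<Sum>x<n. a x) = 0}"

definition pure_tensor :: "(nat \<Rightarrow> 'k::field) list \<Rightarrow> nat list \<Rightarrow> 'k" where
  "pure_tensor vs xs = (if length xs = length vs then (\<Prod>i<length vs. (vs ! i) (xs ! i)) else 0)"

inductive_set span_set :: "(nat list \<Rightarrow> 'k::field) set \<Rightarrow> (nat list \<Rightarrow> 'k) set"
  for S where
  zero: "(\<lambda>_. 0) \<in> span_set S"
| base: "v \<in> S \<Longrightarrow> v \<in> span_set S"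
| add: "v \<in> span_set S \<Longrightarrow> w \<in> span_set S \<Longrightarrow> (\<lambda>xs. v xs + w xs) \<in> span_set S"
| smult: "v \<in> span_set S \<Longrightarrow> (\<lambda>xs. c * v xs) \<in> span_set S"

(* \<overline>P^{(x)s}(n), with the convention \<overline>P^{(x)0} = \<overline>k *)
definition Pbar_tensor :: "nat \<Rightarrow> nat \<Rightarrow> (nat list \<Rightarrow> 'k::field) set" where
  "Pbar_tensor s n =
     (if s = 0 then (if n = 0 then {\<lambda>_. 0} else {v. \<forall>xs. xs \<noteq> [] \<longrightarrow> v xs = 0})
      else span_set {pure_tensor vs | vs. length vs = s \<and> (\<forall>i<s. vs ! i \<in> Pbar n)})"

definition FAmap :: "nat \<Rightarrow> nat \<Rightarrow> (nat \<Rightarrow> nat) \<Rightarrow> (nat list \<Rightarrow> 'k::field) \<Rightarrow> nat list \<Rightarrow> 'k" where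
  "FAmap s n f v = (\<lambda>ys. \<Sum>xs \<in> {xs. length xs = s \<and> set xs \<subseteq> {..<n} \<and> map f xs = ys}. v xs)"

definition is_nat_trans :: "nat \<Rightarrow> nat \<Rightarrow> (nat \<Rightarrow> (nat list \<Rightarrow> 'k::field) \<Rightarrow> nat list \<Rightarrow> 'k) \<Rightarrow> bool" where
  "is_nat_trans s t \<phi> \<longleftrightarrow>
     (\<forall>n. (\<forall>v\<in>Pbar_tensor s n. \<phi> n v \<in> Pbar_tensor t n)
        \<and> (\<forall>v\<in>Pbar_tensor s n. \<forall>w\<in>Pbar_tensor s n. \<phi> n (\<lambda>xs. v xs + w xs) = (\<lambda>xs. \<phi> n v xs + \<phi> n w xs))
        \<and> (\<forall>c. \<forall>v\<in>Pbar_tensor s n. \<phi> n (\<lambda>xs. c * v xs) = (\<lambda>xs. c * \<phi> n v xs)))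
   \<and> (\<forall>n m f. f ` {..<n} \<subseteq> {..<m} \<longrightarrow>
        (\<forall>v\<in>Pbar_tensor s n. \<phi> m (FAmap s n f v) = FAmap t n f (\<phi> n v)))"

definition perms :: "nat \<Rightarrow> (nat \<Rightarrow> nat) set" where
  "perms t = {\<sigma>. \<sigma> permutes {..<t}}"

definition kS :: "nat \<Rightarrow> ((nat \<Rightarrow> nat) \<Rightarrow> 'k::field) set" where
  "kS t = {a. \<forall>\<sigma>. \<sigma> \<notin> perms t \<longrightarrow> a \<sigma> = 0}"

(* product: sigma * tau := tau o sigma (convention matching the right action) *)
definition kS_mult :: "nat \<Rightarrow> ((nat \<Rightarrow> nat) \<Rightarrow> 'k::field) \<Rightarrow> ((nat \<Rightarrow> nat) \<Rightarrow> 'k) \<Rightarrow> (nat \<Rightarrow> nat) \<Rightarrow> 'k" where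
  "kS_mult t a b = (\<lambda>\<pi>. \<Sum>\<sigma>\<in>perms t. \<Sum>\<tau>\<in>perms t. if \<tau> \<circ> \<sigma> = \<pi> then a \<sigma> * b \<tau> else 0)"

definition kS_one :: "(nat \<Rightarrow> nat) \<Rightarrow> 'k::field" where
  "kS_one = (\<lambda>\<sigma>. if \<sigma> = id then 1 else 0)"

(* place permutation (right action by precomposition): [xs].sigma = [xs o sigma] *)
definition pact :: "nat \<Rightarrow> (nat \<Rightarrow> nat) \<Rightarrow> (nat list \<Rightarrow> 'k::field) \<Rightarrow> nat list \<Rightarrow> 'k" where
  "pact t \<sigma> v = (\<lambda>ys. if length ys = t then v (map (\<lambda>j. ys ! inv \<sigma> j) [0..<t]) else 0)"

definition rho :: "nat \<Rightarrow> ((nat \<Rightarrow> nat) \<Rightarrow> 'k::field) \<Rightarrow> nat \<Rightarrow> (nat list \<Rightarrow> 'k) \<Rightarrow> nat list \<Rightarrow> 'k" where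
  "rho t a n v = (\<lambda>ys. \<Sum>\<sigma>\<in>perms t. a \<sigma> * pact t \<sigma> v ys)"

end

theory Submission
  imports Defs
begin

definition lists_in :: "nat \<Rightarrow> (nat \<Rightarrow> nat set) \<Rightarrow> nat list set" where
  "lists_in s A = {xs. length xs = s \<and> (\<forall>i<s. xs!i \<in> A i)}"

lemma lists_in_Suc:
  "lists_in (Suc s) A = (\<lambda>(x,xs). x#xs) ` (A 0 \<times> lists_in s (\<lambda>i. A (Suc i)))"
proof (rule set_eqI, rule iffI)
  fix ys assume "ys \<in> lists_in (Suc s) A"
  then obtain x xs where ys: "ys = x#xs" and "length xs = s" "\<forall>i<Suc s. ys!i \<in> A i"
    unfolding lists_in_def by (cases ys) auto
  then show "ys \<in> (\<lambda>(x,xs). x#xs) ` (A 0 \<times> lists_in s (\<lambda>i. A (Suc i)))"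
    unfolding lists_in_def by (auto intro!: image_eqI[of _ _ "(x,xs)"])
next
  fix ys assume "ys \<in> (\<lambda>(x,xs). x#xs) ` (A 0 \<times> lists_in s (\<lambda>i. A (Suc i)))"
  then show "ys \<in> lists_in (Suc s) A" unfolding lists_in_def
    by (auto simp: less_Suc_eq_0_disj)
qed

lemma lists_in_0: "lists_in 0 A = {[]}" unfolding lists_in_def by auto

lemma finite_lists_in: "(\<And>i. i < s \<Longrightarrow> finite (A i)) \<Longrightarrow> finite (lists_in s A)"
proof (induction s arbitrary: A)
  case 0 then show ?case by (simp add: lists_in_0)
next
  case (Suc s) then show ?case by (simp add: lists_in_Suc)
qed

lemma sum_prod_lists:
  "(\<And>i. i < s \<Longrightarrow> finite (A i)) \<Longrightarrow>
   (\<Sum>xs\<in>lists_in s A. \<Prod>i<s. h i (xs!i)) = (\<Prod>i<s. \<Sum>x\<in>A i. (h i x :: 'k::comm_semiring_1))"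
proof (induction s arbitrary: A h)
  case 0 then show ?case by (simp add: lists_in_0)
next
  case (Suc s)
  have inj: "inj_on (\<lambda>(x,xs). x#xs) (A 0 \<times> lists_in s (\<lambda>i. A (Suc i)))"
    by (auto simp: inj_on_def)
  have fin: "finite (lists_in s (\<lambda>i. A (Suc i)))" using Suc.prems by (intro finite_lists_in) auto
  have "(\<Sum>xs\<in>lists_in (Suc s) A. \<Prod>i<Suc s. h i (xs!i))
     = (\<Sum>(x,xs)\<in>A 0 \<times> lists_in s (\<lambda>i. A (Suc i)). h 0 x * (\<Prod>i<s. h (Suc i) (xs!i)))"
    unfolding lists_in_Suc by (subst sum.reindex[OF inj]) (simp add: case_prod_beta prod.lessThan_Suc_shift del: prod.lessThan_Suc)
  also have "\<dots> = (\<Sum>x\<in>A 0. h 0 x) * (\<Sum>xs\<in>lists_in s (\<lambda>i. A (Suc i)). \<Prod>i<s. h (Suc i) (xs!i))"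
    by (simp add: sum_product sum.cartesian_product)
  also have "\<dots> = (\<Sum>x\<in>A 0. h 0 x) * (\<Prod>i<s. \<Sum>x\<in>A (Suc i). h (Suc i) x)"
    using Suc.IH[of "\<lambda>i. A (Suc i)" "\<lambda>i. h (Suc i)"] Suc.prems by simp
  also have "\<dots> = (\<Prod>i<Suc s. \<Sum>x\<in>A i. h i x)" by (simp add: prod.lessThan_Suc_shift del: prod.lessThan_Suc)
  finally show ?case .
qed


definition ptf :: "nat \<Rightarrow> (nat \<Rightarrow> nat \<Rightarrow> 'k::field) \<Rightarrow> nat list \<Rightarrow> 'k" where
  "ptf s F = (\<lambda>ys. if length ys = s then (\<Prod>i<s. F i (ys!i)) else 0)"

definition push :: "nat \<Rightarrow> (nat \<Rightarrow> nat) \<Rightarrow> (nat \<Rightarrow> 'k::field) \<Rightarrow> nat \<Rightarrow> 'k" where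
  "push n f v = (\<lambda>y. \<Sum>x\<in>{x. x < n \<and> f x = y}. v x)"

definition dl :: "nat \<Rightarrow> nat \<Rightarrow> nat \<Rightarrow> 'k::field" where
  "dl a b = (\<lambda>x. (if x = a then 1 else 0) - (if x = b then 1 else 0))"

lemma pure_tensor_ptf: "pure_tensor vs = ptf (length vs) (\<lambda>i. vs!i)"
  unfolding pure_tensor_def ptf_def by auto

lemma FAmap_set_eq:
  assumes "length ys = s"
  shows "{xs. length xs = s \<and> set xs \<subseteq> {..<n} \<and> map f xs = ys}
       = lists_in s (\<lambda>i. {x. x < n \<and> f x = ys!i})"
  using assms unfolding lists_in_def
  by (auto simp: list_eq_iff_nth_eq set_conv_nth) fastforce+

lemma FAmap_ptf: "FAmap s n f (ptf s F) = ptf s (\<lambda>i. push n f (F i))"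
proof
  fix ys
  show "FAmap s n f (ptf s F) ys = ptf s (\<lambda>i. push n f (F i)) ys"
  proof (cases "length ys = s")
    case False
    have e: "{xs. length xs = s \<and> set xs \<subseteq> {..<n} \<and> map f xs = ys} = {}" using False by auto
    show ?thesis unfolding FAmap_def e using False by (simp add: ptf_def)
  next
    case True
    have "FAmap s n f (ptf s F) ys = (\<Sum>xs\<in>lists_in s (\<lambda>i. {x. x < n \<and> f x = ys!i}). \<Prod>i<s. F i (xs!i))"
      unfolding FAmap_def FAmap_set_eq[OF True]
      by (rule sum.cong) (auto simp: ptf_def lists_in_def)
    also have "\<dots> = (\<Prod>i<s. \<Sum>x\<in>{x. x < n \<and> f x = ys!i}. F i x)"
      by (rule sum_prod_lists) auto
    finally show ?thesis using True by (simp add: ptf_def push_def)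
  qed
qed

lemma push_dl: "a < n \<Longrightarrow> b < n \<Longrightarrow> push n f (dl a b) = dl (f a) (f b)"
  unfolding push_def dl_def
  by (auto simp: sum_subtractf fun_eq_iff sum.If_cases Int_def)

lemma ptf_zero_factor: "i < s \<Longrightarrow> F i = (\<lambda>_. 0) \<Longrightarrow> ptf s F = (\<lambda>_. 0)"
  unfolding ptf_def by (auto intro!: ext prod_zero bexI[where x=i])

lemma ptf_scale: "ptf s (\<lambda>i x. e i * F i x) = (\<lambda>ys. (\<Prod>i<s. e i) * ptf s F ys)"
  unfolding ptf_def by (auto simp: prod.distrib)

lemma Pbar_dl: "a < n \<Longrightarrow> b < n \<Longrightarrow> dl a b \<in> Pbar n"
  unfolding Pbar_def dl_def by (auto simp: sum_subtractf)

lemma ptf_in_PT: "0 < s \<Longrightarrow> (\<And>i. i < s \<Longrightarrow> F i \<in> Pbar n) \<Longrightarrow> ptf s F \<in> Pbar_tensor s n"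
proof -
  assume s: "0 < s" and F: "\<And>i. i < s \<Longrightarrow> F i \<in> Pbar n"
  have "ptf s F = pure_tensor (map F [0..<s])" by (auto simp: pure_tensor_ptf ptf_def intro!: ext prod.cong)
  moreover have "pure_tensor (map F [0..<s]) \<in> Pbar_tensor s n"
    using s F unfolding Pbar_tensor_def by (auto intro!: span_set.base)
  ultimately show ?thesis by simp
qed

lemma PT_zero: "(\<lambda>_. 0) \<in> Pbar_tensor s n"
  unfolding Pbar_tensor_def by (auto intro: span_set.zero)

lemma PT_add: "v \<in> Pbar_tensor s n \<Longrightarrow> w \<in> Pbar_tensor s n \<Longrightarrow> (\<lambda>xs. v xs + w xs) \<in> Pbar_tensor s n"
  unfolding Pbar_tensor_def by (auto split: if_splits intro: span_set.add)

lemma PT_smult: "v \<in> Pbar_tensor s n \<Longrightarrow> (\<lambda>xs. c * v xs) \<in> Pbar_tensor s n"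
  unfolding Pbar_tensor_def by (auto split: if_splits intro: span_set.smult)

lemma PT_sum: "(\<And>k. k \<in> K \<Longrightarrow> F k \<in> Pbar_tensor s n) \<Longrightarrow>
   (\<lambda>ys. \<Sum>k\<in>K. c k * F k ys) \<in> Pbar_tensor s n"
proof (induction K rule: infinite_finite_induct)
  case (infinite A) then show ?case by (simp add: PT_zero)
next
  case empty then show ?case by (simp add: PT_zero)
next
  case (insert x F)
  then show ?case by (simp add: PT_add PT_smult)
qed

lemma PT_support:
  assumes "v \<in> Pbar_tensor s n" "v ys \<noteq> 0"
  shows "length ys = s \<and> (\<forall>i<s. ys!i < n)"
proof (cases "s = 0")
  case True then show ?thesis using assms unfolding Pbar_tensor_def by (auto split: if_splits)
next
  case False
  have "v \<in> span_set {pure_tensor vs | vs. length vs = s \<and> (\<forall>i<s. vs ! i \<in> Pbar n)}"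
    using assms False unfolding Pbar_tensor_def by simp
  then show ?thesis using assms(2)
  proof (induction v rule: span_set.induct)
    case zero then show ?case by simp
  next
    case (base v)
    then obtain vs where vs: "v = pure_tensor vs" "length vs = s" "\<forall>i<s. vs ! i \<in> Pbar n" by auto
    have len: "length ys = s" using base.prems vs unfolding pure_tensor_def by (auto split: if_splits)
    have "\<forall>i<s. ys!i < n"
    proof (intro allI impI, rule ccontr)
      fix i assume i: "i < s" "\<not> ys ! i < n"
      then have "(vs!i) (ys!i) = 0" using vs(3) unfolding Pbar_def by auto
      then have "v ys = 0" using vs len i unfolding pure_tensor_def by (auto intro!: prod_zero bexI[where x=i])
      then show False using base.prems by simp
    qed
    then show ?case using len by simp
  next
    case (add v w) then show ?case by (cases "v ys = 0") auto
  next
    case (smult v c) then show ?case by auto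
  qed
qed

lemma PT_pos_0: "0 < s \<Longrightarrow> v \<in> Pbar_tensor s 0 \<Longrightarrow> v = (\<lambda>_. 0)"
  by (rule ext, rule ccontr) (use PT_support in fastforce)


lemma perms_finite: "finite (perms t)"
  unfolding perms_def by (rule finite_permutations) simp

lemma pact_ptf:
  assumes p: "\<sigma> permutes {..<t}"
  shows "pact t \<sigma> (ptf t F) = ptf t (\<lambda>i. F (\<sigma> i))"
proof
  fix ys
  show "pact t \<sigma> (ptf t F) ys = ptf t (\<lambda>i. F (\<sigma> i)) ys"
  proof (cases "length ys = t")
    case True
    have "(\<Prod>j<t. F j (ys ! inv \<sigma> j)) = (\<Prod>i<t. F (\<sigma> i) (ys ! inv \<sigma> (\<sigma> i)))"
      by (subst prod.permute[OF p]) (simp add: o_def)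
    also have "\<dots> = (\<Prod>i<t. F (\<sigma> i) (ys ! i))" by (simp add: permutes_inverses[OF p])
    finally show ?thesis using True unfolding pact_def ptf_def by simp
  qed (simp add: pact_def ptf_def)
qed

lemma pact_add: "pact t \<sigma> (\<lambda>xs. v xs + w xs) = (\<lambda>ys. pact t \<sigma> v ys + pact t \<sigma> w ys)"
  unfolding pact_def by auto

lemma pact_smult: "pact t \<sigma> (\<lambda>xs. c * v xs) = (\<lambda>ys. c * pact t \<sigma> v ys)"
  unfolding pact_def by auto

lemma pact_zero: "pact t \<sigma> (\<lambda>_. 0) = (\<lambda>_. 0)"
  unfolding pact_def by auto

lemma pact_sum: "pact t \<sigma> (\<lambda>xs. \<Sum>k\<in>K. c k * F k xs) = (\<lambda>ys. \<Sum>k\<in>K. c k * pact t \<sigma> (F k) ys)"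
  unfolding pact_def by (auto simp: fun_eq_iff)

lemma pact_in_PT:
  assumes p: "\<sigma> \<in> perms t" and v: "v \<in> Pbar_tensor t n"
  shows "pact t \<sigma> v \<in> Pbar_tensor t n"
proof (cases "t = 0")
  case True
  then have "\<sigma> = id" using p unfolding perms_def by simp
  have "pact t \<sigma> v = v"
  proof
    fix ys show "pact t \<sigma> v ys = v ys"
      using True PT_support[OF v, of ys] unfolding pact_def by (cases ys) auto
  qed
  then show ?thesis using v by simp
next
  case False
  have p': "\<sigma> permutes {..<t}" using p unfolding perms_def by simp
  have "v \<in> span_set {pure_tensor vs | vs. length vs = t \<and> (\<forall>i<t. vs ! i \<in> Pbar n)}"
    using v False unfolding Pbar_tensor_def by simp
  then show ?thesis
  proof (induction v rule: span_set.induct)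
    case zero then show ?case by (simp add: pact_zero PT_zero)
  next
    case (base v)
    then obtain vs where vs: "v = pure_tensor vs" "length vs = t" "\<forall>i<t. vs ! i \<in> Pbar n" by auto
    have "pact t \<sigma> v = ptf t (\<lambda>i. vs ! \<sigma> i)"
      using vs pact_ptf[OF p'] by (simp add: pure_tensor_ptf)
    moreover have "ptf t (\<lambda>i. vs ! \<sigma> i) \<in> Pbar_tensor t n"
      using False vs(3) permutes_in_image[OF p'] by (intro ptf_in_PT) auto
    ultimately show ?case by simp
  next
    case (add v w) then show ?case by (simp add: pact_add PT_add)
  next
    case (smult v c) then show ?case by (simp add: pact_smult PT_smult)
  qed
qed

lemma rho_in_PT: "v \<in> Pbar_tensor t n \<Longrightarrow> rho t a n v \<in> Pbar_tensor t n"
  unfolding rho_def by (intro PT_sum pact_in_PT) auto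

lemma FAmap_sum: "FAmap s n f (\<lambda>xs. \<Sum>k\<in>K. c k * F k xs) = (\<lambda>ys. \<Sum>k\<in>K. c k * FAmap s n f (F k) ys)"
  unfolding FAmap_def by (auto simp: fun_eq_iff sum_distrib_left intro: sum.swap)

lemma FAmap_add: "FAmap s n f (\<lambda>xs. v xs + w xs) = (\<lambda>ys. FAmap s n f v ys + FAmap s n f w ys)"
  unfolding FAmap_def by (auto simp: sum.distrib)

lemma FAmap_smult: "FAmap s n f (\<lambda>xs. c * v xs) = (\<lambda>ys. c * FAmap s n f v ys)"
  unfolding FAmap_def by (auto simp: sum_distrib_left)

lemma pact_FAmap:
  assumes p: "\<sigma> permutes {..<t}"
  shows "pact t \<sigma> (FAmap t n f v) = FAmap t n f (pact t \<sigma> v)"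
proof
  fix ys
  define S where "S zs = {xs. length xs = t \<and> set xs \<subseteq> {..<n} \<and> map f xs = zs}" for zs
  define P where "P xs = map (\<lambda>j. xs ! inv \<sigma> j) [0..<t]" for xs :: "nat list"
  define Q where "Q xs = map (\<lambda>j. xs ! \<sigma> j) [0..<t]" for xs :: "nat list"
  have inv_lt: "j < t \<Longrightarrow> inv \<sigma> j < t" for j
    using permutes_in_image[OF permutes_inv[OF p]] by simp
  have s_lt: "j < t \<Longrightarrow> \<sigma> j < t" for j
    using permutes_in_image[OF p] by simp
  show "pact t \<sigma> (FAmap t n f v) ys = FAmap t n f (pact t \<sigma> v) ys"
  proof (cases "length ys = t")
    case False
    have e: "{xs. length xs = t \<and> set xs \<subseteq> {..<n} \<and> map f xs = ys} = {}" using False by auto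
    show ?thesis using False unfolding pact_def FAmap_def e by simp
  next
    case True
    have "FAmap t n f (pact t \<sigma> v) ys = (\<Sum>xs\<in>S ys. v (P xs))"
      unfolding FAmap_def pact_def S_def P_def by (rule sum.cong) auto
    also have "\<dots> = (\<Sum>xs\<in>S (P ys). v xs)"
    proof (rule sum.reindex_bij_witness[where i=Q and j=P])
      have SE: "length zs = t \<Longrightarrow> S zs = lists_in t (\<lambda>i. {x. x<n \<and> f x = zs!i})" for zs
        unfolding S_def by (rule FAmap_set_eq)
      have lP: "length (P ys) = t" unfolding P_def by simp
      fix xs assume xs: "xs \<in> S (P ys)"
      then have xs': "length xs = t" "\<And>i. i < t \<Longrightarrow> xs!i < n \<and> f (xs!i) = ys ! inv \<sigma> i"
        unfolding SE[OF lP] lists_in_def by (auto simp: P_def)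
      have "length (Q xs) = t" unfolding Q_def by simp
      moreover have "Q xs ! i < n \<and> f (Q xs ! i) = ys ! i" if "i < t" for i
        using xs'(2)[OF s_lt[OF that]] that unfolding Q_def by (simp add: permutes_inverses[OF p])
      ultimately show "Q xs \<in> S ys"
        unfolding SE[OF True] lists_in_def by auto
      show "P (Q xs) = xs"
        by (rule nth_equalityI) (auto simp: P_def Q_def xs'(1) inv_lt permutes_inverses[OF p])
    next
      have SE: "length zs = t \<Longrightarrow> S zs = lists_in t (\<lambda>i. {x. x<n \<and> f x = zs!i})" for zs
        unfolding S_def by (rule FAmap_set_eq)
      fix xs assume xs: "xs \<in> S ys"
      then have xs': "length xs = t" "\<And>i. i < t \<Longrightarrow> xs!i < n \<and> f (xs!i) = ys ! i"
        unfolding SE[OF True] lists_in_def by auto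
      have lP: "length (P ys) = t" unfolding P_def by simp
      have "length (P xs) = t" unfolding P_def by simp
      moreover have "P xs ! i < n \<and> f (P xs ! i) = P ys ! i" if "i < t" for i
        using xs'(2)[OF inv_lt[OF that]] that unfolding P_def by simp
      ultimately show "P xs \<in> S (P ys)"
        unfolding SE[OF lP] lists_in_def by auto
      show "Q (P xs) = xs"
        by (rule nth_equalityI) (auto simp: P_def Q_def xs'(1) s_lt permutes_inverses[OF p])
    qed simp
    also have "\<dots> = pact t \<sigma> (FAmap t n f v) ys"
      using True unfolding pact_def FAmap_def S_def P_def by simp
    finally show ?thesis by simp
  qed
qed

lemma rho_FAmap: "rho t a m (FAmap t n f v) = FAmap t n f (rho t a n v)"
  unfolding rho_def FAmap_sum by (simp add: pact_FAmap perms_def)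

lemma rho_add: "rho t a n (\<lambda>xs. v xs + w xs) = (\<lambda>ys. rho t a n v ys + rho t a n w ys)"
  unfolding rho_def pact_add by (auto simp: distrib_left sum.distrib)

lemma rho_smult: "rho t a n (\<lambda>xs. c * v xs) = (\<lambda>ys. c * rho t a n v ys)"
  unfolding rho_def pact_smult by (auto simp: sum_distrib_left ac_simps)

lemma rho_zero: "rho t a n (\<lambda>_. 0) = (\<lambda>_. 0)"
  unfolding rho_def pact_zero by auto

lemma pact_pact:
  assumes "\<sigma> permutes {..<t}" "\<tau> permutes {..<t}"
  shows "pact t \<sigma> (pact t \<tau> v) = pact t (\<tau> \<circ> \<sigma>) v"
proof -
  have inv_lt: "j < t \<Longrightarrow> inv \<tau> j < t" for j
    using permutes_in_image[OF permutes_inv[OF assms(2)]] by simp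
  have i: "inv (\<tau> \<circ> \<sigma>) j = inv \<sigma> (inv \<tau> j)" for j
    using o_inv_distrib[OF permutes_bij[OF assms(2)] permutes_bij[OF assms(1)]] by simp
  have m: "map (\<lambda>j. map (\<lambda>j. ys ! inv \<sigma> j) [0..<t] ! inv \<tau> j) [0..<t]
         = map (\<lambda>j. ys ! inv (\<tau> \<circ> \<sigma>) j) [0..<t]" for ys
    by (rule map_cong[OF refl]) (simp add: inv_lt i)
  show ?thesis unfolding pact_def by (rule ext) (simp add: m)
qed

lemma pact_id: "v \<in> Pbar_tensor t n \<Longrightarrow> pact t id v = v"
proof
  fix ys assume v: "v \<in> Pbar_tensor t n"
  show "pact t id v ys = v ys"
  proof (cases "length ys = t")
    case True
    then have "map (\<lambda>j. ys ! inv id j) [0..<t] = ys" using map_nth[of ys] by simp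
    then show ?thesis using True unfolding pact_def by simp
  qed (use PT_support[OF v, of ys] in \<open>auto simp: pact_def\<close>)
qed


lemma NT_in: "is_nat_trans s t \<phi> \<Longrightarrow> v \<in> Pbar_tensor s n \<Longrightarrow> \<phi> n v \<in> Pbar_tensor t n"
  unfolding is_nat_trans_def by blast
lemma NT_add: "is_nat_trans s t \<phi> \<Longrightarrow> v \<in> Pbar_tensor s n \<Longrightarrow> w \<in> Pbar_tensor s n \<Longrightarrow>
   \<phi> n (\<lambda>xs. v xs + w xs) = (\<lambda>xs. \<phi> n v xs + \<phi> n w xs)"
  unfolding is_nat_trans_def by blast
lemma NT_smult: "is_nat_trans s t \<phi> \<Longrightarrow> v \<in> Pbar_tensor s n \<Longrightarrow>
   \<phi> n (\<lambda>xs. c * v xs) = (\<lambda>xs. c * \<phi> n v xs)"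
  unfolding is_nat_trans_def by blast
lemma NT_nat: "is_nat_trans s t \<phi> \<Longrightarrow> f ` {..<n} \<subseteq> {..<m} \<Longrightarrow> v \<in> Pbar_tensor s n \<Longrightarrow>
   \<phi> m (FAmap s n f v) = FAmap t n f (\<phi> n v)"
  unfolding is_nat_trans_def by blast
lemma NT_zero: "is_nat_trans s t \<phi> \<Longrightarrow> \<phi> n (\<lambda>_. 0) = (\<lambda>_. 0)"
  using NT_smult[OF _ PT_zero, where c=0] by simp

lemma NT_sum:
  assumes "is_nat_trans s t \<phi>" "\<And>k. k \<in> K \<Longrightarrow> F k \<in> Pbar_tensor s n"
  shows "\<phi> n (\<lambda>ys. \<Sum>k\<in>K. c k * F k ys) = (\<lambda>ys. \<Sum>k\<in>K. c k * \<phi> n (F k) ys)"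
  using assms(2)
proof (induction K rule: infinite_finite_induct)
  case (infinite A) then show ?case using NT_zero[OF assms(1)] by simp
next
  case empty then show ?case using NT_zero[OF assms(1)] by simp
next
  case (insert x K)
  have "\<phi> n (\<lambda>ys. \<Sum>k\<in>insert x K. c k * F k ys)
      = \<phi> n (\<lambda>ys. (\<lambda>ys. c x * F x ys) ys + (\<lambda>ys. \<Sum>k\<in>K. c k * F k ys) ys)"
    using insert by simp
  also have "\<dots> = (\<lambda>ys. \<phi> n (\<lambda>ys. c x * F x ys) ys + \<phi> n (\<lambda>ys. \<Sum>k\<in>K. c k * F k ys) ys)"
    using insert by (intro NT_add[OF assms(1)] PT_smult PT_sum) auto
  also have "\<dots> = (\<lambda>ys. \<Sum>k\<in>insert x K. c k * \<phi> n (F k) ys)"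
    using insert NT_smult[OF assms(1), of "F x" n "c x"] by simp
  finally show ?case .
qed

theorem rho_nat: "is_nat_trans t t (rho t a)"
  unfolding is_nat_trans_def
  by (auto simp: rho_in_PT rho_add rho_smult rho_FAmap)

lemma zero_nat: "is_nat_trans s t (\<lambda>n v. (\<lambda>_. 0::'k::field))"
  unfolding is_nat_trans_def by (auto simp: PT_zero FAmap_def)

definition gen :: "nat \<Rightarrow> nat list \<Rightarrow> 'k::field" where
  "gen s = ptf s (\<lambda>i. dl (2*i) (2*i+1))"

lemma gen_in: "0 < s \<Longrightarrow> gen s \<in> Pbar_tensor s (2*s)"
  unfolding gen_def by (rule ptf_in_PT) (auto intro: Pbar_dl)

lemma FAmap_gen:
  assumes "\<And>i. i < s \<Longrightarrow> f (2*i) = a i" "\<And>i. i < s \<Longrightarrow> f (2*i+1) = b i"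
  shows "FAmap s (2*s) f (gen s) = ptf s (\<lambda>i. dl (a i) (b i))"
proof -
  have "ptf s (\<lambda>i. push (2*s) f (dl (2*i) (2*i+1))) = ptf s (\<lambda>i. dl (a i) (b i))"
    unfolding ptf_def using assms by (auto intro!: ext prod.cong simp: push_dl)
  then show ?thesis unfolding gen_def FAmap_ptf .
qed

definition fx :: "nat \<Rightarrow> nat list \<Rightarrow> nat \<Rightarrow> nat" where
  "fx s xs x = (if x < 2*s \<and> even x then xs ! (x div 2) else 0)"

lemma fx_gen: "FAmap s (2*s) (fx s xs) (gen s) = ptf s (\<lambda>i. dl (xs!i) 0)"
  by (rule FAmap_gen) (auto simp: fx_def)

lemma fx_range: "0 < n \<Longrightarrow> xs \<in> lists_in s (\<lambda>_. {..<n}) \<Longrightarrow> fx s xs ` {..<2*s} \<subseteq> {..<n}"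
  unfolding fx_def lists_in_def by auto

lemma expansion:
  assumes n: "0 < n" and vs: "length vs = s" "\<forall>i<s. vs ! i \<in> Pbar n"
  shows "pure_tensor vs = (\<lambda>ys. \<Sum>xs\<in>lists_in s (\<lambda>_. {..<n}).
            (\<Prod>i<s. (vs!i) (xs!i)) * FAmap s (2*s) (fx s xs) (gen s) ys)"
proof
  fix ys
  show "pure_tensor vs ys = (\<Sum>xs\<in>lists_in s (\<lambda>_. {..<n}).
            (\<Prod>i<s. (vs!i) (xs!i)) * FAmap s (2*s) (fx s xs) (gen s) ys)"
  proof (cases "length ys = s")
    case False then show ?thesis unfolding fx_gen by (simp add: pure_tensor_def ptf_def vs)
  next
    case True
    have inner: "(\<Sum>x<n. (vs!i) x * dl x 0 (ys!i)) = (vs!i) (ys!i)" if i: "i < s" for i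
    proof -
      have P: "vs!i \<in> Pbar n" using vs i by auto
      define y where "y = ys!i"
      have "(\<Sum>x<n. (vs!i) x * dl x 0 y) = (\<Sum>x<n. (if x = y then (vs!i) x else 0) - (if y = 0 then (vs!i) x else 0))"
        by (rule sum.cong) (auto simp: dl_def)
      also have "\<dots> = (if y < n then (vs!i) y else 0) - (if y = 0 then (\<Sum>x<n. (vs!i) x) else 0)"
        by (simp add: sum_subtractf)
      also have "\<dots> = (vs!i) y"
        using P unfolding Pbar_def by auto
      finally have "(\<Sum>x<n. (vs!i) x * dl x 0 y) = (vs!i) y" .
      then show ?thesis by (simp add: y_def)
    qed
    have "(\<Sum>xs\<in>lists_in s (\<lambda>_. {..<n}). (\<Prod>i<s. (vs!i) (xs!i)) * FAmap s (2*s) (fx s xs) (gen s) ys)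
        = (\<Sum>xs\<in>lists_in s (\<lambda>_. {..<n}). \<Prod>i<s. (vs!i) (xs!i) * dl (xs!i) 0 (ys!i))"
      unfolding fx_gen using True by (simp add: ptf_def prod.distrib)
    also have "\<dots> = (\<Prod>i<s. \<Sum>x<n. (vs!i) x * dl x 0 (ys!i))"
      by (rule sum_prod_lists) auto
    also have "\<dots> = (\<Prod>i<s. (vs!i) (ys!i))" by (rule prod.cong) (simp_all add: inner)
    finally show ?thesis using True vs by (simp add: pure_tensor_def)
  qed
qed

lemma NT_pure:
  assumes \<psi>: "is_nat_trans s t \<psi>" and s: "0 < s" and n: "0 < n"
    and vs: "length vs = s" "\<forall>i<s. vs ! i \<in> Pbar n"
  shows "\<psi> n (pure_tensor vs) = (\<lambda>ys. \<Sum>xs\<in>lists_in s (\<lambda>_. {..<n}).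
            (\<Prod>i<s. (vs!i) (xs!i)) * FAmap t (2*s) (fx s xs) (\<psi> (2*s) (gen s)) ys)"
proof -
  have mem: "FAmap s (2*s) (fx s xs) (gen s) \<in> Pbar_tensor s n" if "xs \<in> lists_in s (\<lambda>_. {..<n})" for xs
    unfolding fx_gen using that s n by (intro ptf_in_PT Pbar_dl) (auto simp: lists_in_def)
  have "\<psi> n (pure_tensor vs) = (\<lambda>ys. \<Sum>xs\<in>lists_in s (\<lambda>_. {..<n}).
            (\<Prod>i<s. (vs!i) (xs!i)) * \<psi> n (FAmap s (2*s) (fx s xs) (gen s)) ys)"
    unfolding expansion[OF n vs]
    by (rule NT_sum[OF \<psi>, where F="\<lambda>xs. FAmap s (2*s) (fx s xs) (gen s)"]) (rule mem)
  also have "\<dots> = (\<lambda>ys. \<Sum>xs\<in>lists_in s (\<lambda>_. {..<n}).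
            (\<Prod>i<s. (vs!i) (xs!i)) * FAmap t (2*s) (fx s xs) (\<psi> (2*s) (gen s)) ys)"
    using NT_nat[OF \<psi> fx_range[OF n] gen_in[OF s]] by (auto intro!: ext sum.cong)
  finally show ?thesis .
qed

lemma NT_determined:
  assumes \<psi>1: "is_nat_trans s t \<psi>1" and \<psi>2: "is_nat_trans s t \<psi>2" and s: "0 < s"
    and eq: "\<psi>1 (2*s) (gen s) = \<psi>2 (2*s) (gen s)"
    and v: "v \<in> Pbar_tensor s n"
  shows "\<psi>1 n v = \<psi>2 n v"
proof (cases "n = 0")
  case True
  then have "v = (\<lambda>_. 0)" using PT_pos_0[OF s] v by simp
  then show ?thesis using NT_zero[OF \<psi>1] NT_zero[OF \<psi>2] by simp
next
  case False
  then have n: "0 < n" by simp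
  have "v \<in> span_set {pure_tensor vs | vs. length vs = s \<and> (\<forall>i<s. vs ! i \<in> Pbar n)}"
    using v s unfolding Pbar_tensor_def by simp
  then show ?thesis
  proof (induction v rule: span_set.induct)
    case zero then show ?case using NT_zero[OF \<psi>1] NT_zero[OF \<psi>2] by simp
  next
    case (base v)
    then obtain vs where vs: "v = pure_tensor vs" "length vs = s" "\<forall>i<s. vs ! i \<in> Pbar n" by auto
    show ?case unfolding vs(1) NT_pure[OF \<psi>1 s n vs(2,3)] NT_pure[OF \<psi>2 s n vs(2,3)] eq ..
  next
    case (add v w)
    have "v \<in> Pbar_tensor s n" "w \<in> Pbar_tensor s n" using add s by (simp_all add: Pbar_tensor_def)
    then show ?case using add NT_add[OF \<psi>1] NT_add[OF \<psi>2] by simp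
  next
    case (smult v c)
    have "v \<in> Pbar_tensor s n" using smult s by (simp_all add: Pbar_tensor_def)
    then show ?case using smult NT_smult[OF \<psi>1] NT_smult[OF \<psi>2] by simp
  qed
qed


lemma collapse:
  assumes \<phi>: "is_nat_trans s t \<phi>" and s: "0 < s" and nz: "\<phi> (2*s) (gen s) z \<noteq> 0"
  shows "length z = t \<and> (\<forall>k<t. z!k < 2*s) \<and> (\<forall>i<s. \<exists>k<t. z!k div 2 = i)"
proof -
  define w where "w = \<phi> (2*s) (gen s)"
  have wPT: "w \<in> Pbar_tensor t (2*s)" unfolding w_def by (rule NT_in[OF \<phi> gen_in[OF s]])
  have sup: "length z = t" "\<forall>k<t. z!k < 2*s" using PT_support[OF wPT] nz unfolding w_def by auto
  have "\<exists>k<t. z!k div 2 = i" if i: "i < s" for i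
  proof (rule ccontr)
    assume no: "\<not> (\<exists>k<t. z!k div 2 = i)"
    define c where "c x = (if x = 2*i+1 then 2*i else x)" for x
    have crange: "c ` {..<2*s} \<subseteq> {..<2*s}" unfolding c_def by auto
    have "FAmap s (2*s) c (gen s) = ptf s (\<lambda>k. dl (2*k) (if k = i then 2*i else 2*k+1))"
      by (rule FAmap_gen) (auto simp: c_def, presburger)
    also have "\<dots> = (\<lambda>_. 0)"
      by (rule ptf_zero_factor[OF i]) (simp add: dl_def fun_eq_iff)
    finally have G0: "FAmap s (2*s) c (gen s) = (\<lambda>_. 0)" .
    have F0: "FAmap t (2*s) c w = (\<lambda>_. 0)"
      unfolding w_def NT_nat[OF \<phi> crange gen_in[OF s], symmetric] G0 NT_zero[OF \<phi>] ..
    have Seq: "{xs. length xs = t \<and> set xs \<subseteq> {..<2*s} \<and> map c xs = z} = {z}"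
    proof (intro set_eqI iffI)
      fix xs assume xs: "xs \<in> {xs. length xs = t \<and> set xs \<subseteq> {..<2*s} \<and> map c xs = z}"
      have "xs = z"
      proof (rule nth_equalityI)
        show "length xs = length z" using xs sup by auto
        fix k assume k: "k < length xs"
        have "c (xs!k) = z!k" using xs k by auto
        moreover have "z!k div 2 \<noteq> i" using no k xs by auto
        ultimately show "xs!k = z!k" unfolding c_def by (auto split: if_splits)
      qed
      then show "xs \<in> {z}" by simp
    next
      fix xs assume "xs \<in> {z}"
      then have xz: "xs = z" by simp
      have "map c z = z"
      proof (rule nth_equalityI)
        fix k assume "k < length (map c z)"
        then have k: "k < t" using sup by simp
        have "z!k \<noteq> 2*i+1" using no k by auto
        then show "map c z ! k = z ! k" using k sup by (simp add: c_def)
      qed simp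
      moreover have "set z \<subseteq> {..<2*s}" using sup by (auto simp: set_conv_nth)
      ultimately show "xs \<in> {xs. length xs = t \<and> set xs \<subseteq> {..<2*s} \<and> map c xs = z}"
        using xz sup by simp
    qed
    have "FAmap t (2*s) c w z = 0" using F0 by simp
    then have "w z = 0" unfolding FAmap_def Seq by simp
    then show False using nz unfolding w_def by simp
  qed
  then show ?thesis using sup by blast
qed

definition dD :: "nat set \<Rightarrow> nat \<Rightarrow> nat" where
  "dD D x = (if x div 2 \<in> D then (if even x then x+1 else x-1) else x)"

lemma dD_invol: "dD D (dD D x) = x"
proof (cases "even x")
  case True
  then have "(x+1) div 2 = x div 2" "odd (x+1)" by auto
  then show ?thesis using True unfolding dD_def by auto
next
  case False
  then have "x \<ge> 1" "(x-1) div 2 = x div 2" "even (x-1)" by (auto elim: oddE)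
  then show ?thesis using False unfolding dD_def by auto
qed

lemma dD_inj: "inj (dD D)"
  by (metis dD_invol injI)

lemma sign:
  assumes \<phi>: "is_nat_trans t t \<phi>" and t: "0 < t"
    and z: "length z = t" "\<forall>k<t. z!k < 2*t"
  shows "\<phi> (2*t) (gen t) z = (\<Prod>k<t. if k \<in> D then -1 else 1) * \<phi> (2*t) (gen t) (map (dD D) z)"
proof -
  define w where "w = \<phi> (2*t) (gen t)"
  define \<epsilon> :: 'a where "\<epsilon> = (\<Prod>k<t. if k \<in> D then -1 else 1)"
  have drange: "dD D ` {..<2*t} \<subseteq> {..<2*t}" unfolding dD_def by (auto elim!: evenE oddE)
  have "FAmap t (2*t) (dD D) (gen t) = ptf t (\<lambda>k. dl (dD D (2*k)) (dD D (2*k+1)))"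
    by (rule FAmap_gen) auto
  also have "\<dots> = ptf t (\<lambda>k x. (if k \<in> D then -1 else 1) * dl (2*k) (2*k+1) x)"
    unfolding ptf_def dD_def dl_def by (auto intro!: ext prod.cong)
  also have "\<dots> = (\<lambda>ys. \<epsilon> * gen t ys)" unfolding ptf_scale gen_def \<epsilon>_def ..
  finally have F1: "FAmap t (2*t) (dD D) w = (\<lambda>ys. \<epsilon> * w ys)"
    using NT_nat[OF \<phi> drange gen_in[OF t]] NT_smult[OF \<phi> gen_in[OF t]] unfolding w_def by simp
  have Seq: "{xs. length xs = t \<and> set xs \<subseteq> {..<2*t} \<and> map (dD D) xs = map (dD D) z} = {z}"
    using z dD_inj[of D] by (auto simp: set_conv_nth)
  have "FAmap t (2*t) (dD D) w (map (dD D) z) = \<epsilon> * w (map (dD D) z)" using F1 by simp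
  then have "w z = \<epsilon> * w (map (dD D) z)"
    unfolding FAmap_def Seq by simp
  then show ?thesis unfolding w_def \<epsilon>_def .
qed

lemma sign_nz: "(\<Prod>k<(t::nat). if k \<in> D then -1 else 1) \<noteq> (0::'k::field)"
  by simp

lemma perm_eq_on: "\<sigma> permutes {..<t} \<Longrightarrow> \<tau> permutes {..<t} \<Longrightarrow> (\<forall>i<t. \<sigma> i = \<tau> i) \<Longrightarrow> \<sigma> = \<tau>"
  by (rule ext) (metis lessThan_iff permutes_not_in)

lemma rho_gen_E:
  assumes \<tau>: "\<tau> \<in> perms t"
  shows "rho t a (2*t) (gen t) (map (\<lambda>k. 2 * \<tau> k) [0..<t]) = a \<tau>"
proof -
  have pe: "pact t \<sigma> (gen t) (map (\<lambda>k. 2 * \<tau> k) [0..<t]) = (if \<sigma> = \<tau> then 1 else 0)"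
    if \<sigma>: "\<sigma> \<in> perms t" for \<sigma>
  proof -
    have ps: "\<sigma> permutes {..<t}" "\<tau> permutes {..<t}" using \<sigma> \<tau> unfolding perms_def by auto
    have "pact t \<sigma> (gen t) (map (\<lambda>k. 2 * \<tau> k) [0..<t])
        = (\<Prod>i<t. dl (2 * \<sigma> i) (2 * \<sigma> i + 1) (2 * \<tau> i))"
      unfolding gen_def pact_ptf[OF ps(1)] by (simp add: ptf_def)
    also have "\<dots> = (\<Prod>i<t. if \<sigma> i = \<tau> i then 1 else 0)"
    proof (rule prod.cong)
      have odd: "2*a \<noteq> 2*b+1" for a b :: nat by presburger
      show "dl (2 * \<sigma> i) (2 * \<sigma> i + 1) (2 * \<tau> i) = (if \<sigma> i = \<tau> i then 1 else 0)" for i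
        unfolding dl_def using odd by auto
    qed simp
    also have "\<dots> = (if \<sigma> = \<tau> then 1 else 0)"
    proof (cases "\<sigma> = \<tau>")
      case False
      then obtain i where "i < t" "\<sigma> i \<noteq> \<tau> i" using perm_eq_on[OF ps] by blast
      then show ?thesis using False by (intro trans[OF prod_zero]) auto
    qed simp
    finally show ?thesis .
  qed
  have "rho t a (2*t) (gen t) (map (\<lambda>k. 2 * \<tau> k) [0..<t])
       = (\<Sum>\<sigma>\<in>perms t. a \<sigma> * (if \<sigma> = \<tau> then 1 else 0))"
    unfolding rho_def by (intro sum.cong refl) (simp only: pe)
  also have "\<dots> = a \<tau>" using \<tau> perms_finite by (simp add: if_distrib cong: if_cong)
  finally show ?thesis .
qed

lemma good_perm:
  assumes "length z = t" "\<forall>k<t. z!k < 2*t" "\<forall>i<t. \<exists>k<t. z!k div 2 = i"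
  shows "\<exists>\<pi>. \<pi> permutes {..<t} \<and> (\<forall>k<t. z!k div 2 = \<pi> k)"
proof -
  define \<pi> where "\<pi> k = (if k < t then z!k div 2 else k)" for k
  have img: "\<pi> ` {..<t} = {..<t}"
  proof
    show "\<pi> ` {..<t} \<subseteq> {..<t}" using assms(2) unfolding \<pi>_def by fastforce
    show "{..<t} \<subseteq> \<pi> ` {..<t}" using assms(3) unfolding \<pi>_def by force
  qed
  have "inj_on \<pi> {..<t}" by (rule finite_surj_inj) (use img in auto)
  then have "bij_betw \<pi> {..<t} {..<t}" using img by (simp add: bij_betw_def)
  then have "\<pi> permutes {..<t}" by (rule bij_imp_permutes) (simp add: \<pi>_def)
  then show ?thesis unfolding \<pi>_def by auto
qed

lemma good_map:
  assumes z: "length z = t" and \<pi>: "\<pi> permutes {..<t}" and zp: "\<forall>k<t. z!k div 2 = \<pi> k"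
  shows "map (dD {i. \<exists>k<t. z!k = 2*i+1}) z = map (\<lambda>k. 2 * \<pi> k) [0..<t]"
proof (rule nth_equalityI)
  fix k assume "k < length (map (dD {i. \<exists>k<t. z!k = 2*i+1}) z)"
  then have k: "k < t" using z by simp
  have inj: "\<pi> k' = \<pi> k \<Longrightarrow> k' = k" for k' using permutes_inj[OF \<pi>] by (auto dest: injD)
  show "map (dD {i. \<exists>k<t. z!k = 2*i+1}) z ! k = map (\<lambda>k. 2 * \<pi> k) [0..<t] ! k"
  proof (cases "even (z!k)")
    case True
    then have zk: "z!k = 2 * \<pi> k" using zp k by (metis dvd_mult_div_cancel)
    have "\<not> (\<exists>k'<t. z!k' = 2 * \<pi> k + 1)"
    proof
      assume "\<exists>k'<t. z!k' = 2 * \<pi> k + 1"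
      then obtain k' where k': "k' < t" "z!k' = 2 * \<pi> k + 1" by blast
      have "z!k' div 2 = \<pi> k" using k'(2) by simp
      then have "\<pi> k' = \<pi> k" using zp k'(1) by simp
      then have "k' = k" by (rule inj)
      then show False using k' True zk by simp
    qed
    then show ?thesis using k z zk unfolding dD_def by auto
  next
    case False
    then have zk: "z!k = 2 * \<pi> k + 1" using zp k by (metis odd_two_times_div_two_succ)
    then show ?thesis using k z unfolding dD_def by auto
  qed
qed (simp add: z)


lemma perms_0: "perms 0 = {id}"
  unfolding perms_def by auto

lemma FAmap_0: "FAmap 0 m f w = (\<lambda>ys. if ys = [] then w [] else 0)"
proof
  fix ys
  have "{xs. length xs = 0 \<and> set xs \<subseteq> {..<m} \<and> map f xs = ys} = (if ys = [] then {[]} else {})"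
    by auto
  then show "FAmap 0 m f w ys = (if ys = [] then w [] else 0)" unfolding FAmap_def by simp
qed

lemma rho_one: "v \<in> Pbar_tensor t n \<Longrightarrow> rho t kS_one n v = v"
proof -
  assume v: "v \<in> Pbar_tensor t n"
  have idp: "id \<in> perms t" unfolding perms_def by simp
  have "rho t kS_one n v = (\<lambda>ys. \<Sum>\<sigma>\<in>perms t. if \<sigma> = id then pact t \<sigma> v ys else 0)"
    unfolding rho_def kS_one_def by (intro ext sum.cong) auto
  also have "\<dots> = pact t id v" using idp perms_finite by (simp add: sum.delta)
  also have "\<dots> = v" by (rule pact_id[OF v])
  finally show ?thesis .
qed

lemma rho_lin: "rho t (\<lambda>\<sigma>. a \<sigma> + c * b \<sigma>) n v = (\<lambda>ys. rho t a n v ys + c * rho t b n v ys)"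
  unfolding rho_def by (auto simp: distrib_right sum.distrib sum_distrib_left mult.assoc)

lemma rho_mult: "rho t (kS_mult t a b) n v = rho t a n (rho t b n v)"
proof
  fix ys
  let ?P = "perms t"
  have cl: "\<sigma> \<in> ?P \<Longrightarrow> \<tau> \<in> ?P \<Longrightarrow> \<tau> \<circ> \<sigma> \<in> ?P" for \<sigma> \<tau>
    unfolding perms_def by (auto intro: permutes_compose)
  have "rho t (kS_mult t a b) n v ys
      = (\<Sum>\<pi>\<in>?P. \<Sum>\<sigma>\<in>?P. \<Sum>\<tau>\<in>?P. if \<tau> \<circ> \<sigma> = \<pi> then a \<sigma> * b \<tau> * pact t \<pi> v ys else 0)"
    unfolding rho_def kS_mult_def sum_distrib_right by (intro sum.cong refl) auto
  also have "\<dots> = (\<Sum>\<sigma>\<in>?P. \<Sum>\<tau>\<in>?P. \<Sum>\<pi>\<in>?P. if \<tau> \<circ> \<sigma> = \<pi> then a \<sigma> * b \<tau> * pact t \<pi> v ys else 0)"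
    by (subst sum.swap) (rule sum.cong[OF refl], rule sum.swap)
  also have "\<dots> = (\<Sum>\<sigma>\<in>?P. \<Sum>\<tau>\<in>?P. a \<sigma> * b \<tau> * pact t (\<tau> \<circ> \<sigma>) v ys)"
    using cl perms_finite by (intro sum.cong refl) (simp add: sum.delta)
  also have "\<dots> = (\<Sum>\<sigma>\<in>?P. a \<sigma> * (\<Sum>\<tau>\<in>?P. b \<tau> * pact t \<sigma> (pact t \<tau> v) ys))"
    by (intro sum.cong refl) (simp add: sum_distrib_left pact_pact perms_def mult.assoc)
  also have "\<dots> = rho t a n (rho t b n v) ys"
    unfolding rho_def pact_sum by simp
  finally show "rho t (kS_mult t a b) n v ys = rho t a n (rho t b n v) ys" .
qed

lemma v0_in: "0 < n \<Longrightarrow> (\<lambda>ys. if ys = [] then 1 else 0) \<in> Pbar_tensor 0 n"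
  unfolding Pbar_tensor_def by auto

lemma inj_part:
  assumes a: "a \<in> kS t" and b: "b \<in> kS t"
    and H: "\<forall>n. \<forall>v\<in>Pbar_tensor t n. rho t a n v = rho t b n v"
  shows "a = b"
proof
  fix \<sigma>
  show "a \<sigma> = b \<sigma>"
  proof (cases "\<sigma> \<in> perms t")
    case False then show ?thesis using a b unfolding kS_def by auto
  next
    case True
    show ?thesis
    proof (cases "t = 0")
      case t0: True
      define v0 :: "nat list \<Rightarrow> 'a" where "v0 = (\<lambda>ys. if ys = [] then 1 else 0)"
      have "\<sigma> = id" using True t0 perms_0 by simp
      have "rho 0 c 1 v0 [] = c id" for c :: "(nat \<Rightarrow> nat) \<Rightarrow> 'a"
        unfolding rho_def perms_0 pact_def v0_def by simp
      moreover have "rho 0 a 1 v0 = rho 0 b 1 v0" using H v0_in[of 1] t0 unfolding v0_def by auto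
      ultimately show ?thesis using \<open>\<sigma> = id\<close> by metis
    next
      case False
      then have "gen t \<in> Pbar_tensor t (2*t)" by (intro gen_in) simp
      then have "rho t a (2*t) (gen t) = rho t b (2*t) (gen t)" using H by blast
      then show ?thesis using rho_gen_E[OF True, of a] rho_gen_E[OF True, of b] by metis
    qed
  qed
qed

lemma surj_part:
  assumes \<phi>: "is_nat_trans t t \<phi>"
  shows "\<exists>a\<in>kS t. \<forall>n. \<forall>v\<in>Pbar_tensor t n. \<phi> n v = rho t a n v"
proof (cases "t = 0")
  case True
  define v0 :: "nat list \<Rightarrow> 'a" where "v0 = (\<lambda>ys. if ys = [] then 1 else 0)"
  define a where "a = (\<lambda>\<sigma>::nat\<Rightarrow>nat. if \<sigma> = id then \<phi> 1 v0 [] else 0)"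
  have "a \<in> kS t" unfolding kS_def a_def using True perms_0 by auto
  moreover have "\<phi> n v = rho t a n v" if v: "v \<in> Pbar_tensor t n" for n v
  proof (cases "n = 0")
    case True
    then have "v = (\<lambda>_. 0)" using v \<open>t = 0\<close> unfolding Pbar_tensor_def by simp
    then show ?thesis using NT_zero[OF \<phi>] by (simp add: rho_def pact_def)
  next
    case False
    have vv: "ys \<noteq> [] \<Longrightarrow> v ys = 0" for ys
      using v \<open>t = 0\<close> False unfolding Pbar_tensor_def by auto
    have v_eq: "v = (\<lambda>ys. v [] * v0 ys)" unfolding v0_def using vv by (auto intro!: ext)
    have v0n: "v0 \<in> Pbar_tensor t n" using v0_in[of n] False \<open>t = 0\<close> unfolding v0_def by simp
    have v01: "v0 \<in> Pbar_tensor t 1" using v0_in[of 1] \<open>t = 0\<close> unfolding v0_def by simp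
    have fr: "(\<lambda>_::nat. 0::nat) ` {..<1} \<subseteq> {..<n}" using False by auto
    have "FAmap t 1 (\<lambda>_. 0) v0 = v0" unfolding \<open>t = 0\<close> FAmap_0 v0_def by auto
    then have "\<phi> n v0 = FAmap t 1 (\<lambda>_. 0) (\<phi> 1 v0)" using NT_nat[OF \<phi> fr v01] by simp
    then have pv0: "\<phi> n v0 = (\<lambda>ys. if ys = [] then \<phi> 1 v0 [] else 0)" unfolding \<open>t = 0\<close> FAmap_0 .
    have "\<phi> n v = (\<lambda>ys. v [] * \<phi> n v0 ys)" by (subst v_eq) (rule NT_smult[OF \<phi> v0n])
    also have "\<dots> = rho t a n v"
      unfolding rho_def \<open>t = 0\<close> perms_0 a_def pact_def pv0 by (auto intro!: ext simp: vv)
    finally show ?thesis .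
  qed
  ultimately show ?thesis by blast
next
  case False
  then have t: "0 < t" by simp
  define w where "w = \<phi> (2*t) (gen t)"
  define a where "a = (\<lambda>\<sigma>. if \<sigma> \<in> perms t then w (map (\<lambda>k. 2 * \<sigma> k) [0..<t]) else 0)"
  define u where "u = rho t a (2*t) (gen t)"
  have akS: "a \<in> kS t" unfolding kS_def a_def by auto
  have "w z = u z" for z
  proof (cases "length z = t \<and> (\<forall>k<t. z!k < 2*t) \<and> (\<forall>i<t. \<exists>k<t. z!k div 2 = i)")
    case False
    have "w z = 0" using collapse[OF \<phi> t, of z] False unfolding w_def by auto
    moreover have "u z = 0" using collapse[OF rho_nat t, of a z] False unfolding u_def by auto
    ultimately show ?thesis by simp
  next
    case True
    obtain \<pi> where \<pi>: "\<pi> permutes {..<t}" "\<forall>k<t. z!k div 2 = \<pi> k"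
      using good_perm[of z t] True by blast
    define D where "D = {i. \<exists>k<t. z!k = 2*i+1}"
    have m: "map (dD D) z = map (\<lambda>k. 2 * \<pi> k) [0..<t]"
      unfolding D_def using good_map[OF _ \<pi>] True by simp
    have \<pi>P: "\<pi> \<in> perms t" using \<pi> unfolding perms_def by simp
    have "w z = (\<Prod>k<t. if k \<in> D then -1 else 1) * w (map (\<lambda>k. 2 * \<pi> k) [0..<t])"
      using sign[OF \<phi> t, where z=z and D=D] True m unfolding w_def by simp
    moreover have "u z = (\<Prod>k<t. if k \<in> D then -1 else 1) * u (map (\<lambda>k. 2 * \<pi> k) [0..<t])"
      using sign[OF rho_nat t, where z=z and D=D] True m unfolding u_def by simp
    moreover have "u (map (\<lambda>k. 2 * \<pi> k) [0..<t]) = w (map (\<lambda>k. 2 * \<pi> k) [0..<t])"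
      unfolding u_def rho_gen_E[OF \<pi>P] a_def using \<pi>P by simp
    ultimately show ?thesis by simp
  qed
  then have "\<phi> (2*t) (gen t) = rho t a (2*t) (gen t)" unfolding w_def u_def by auto
  then have "\<phi> n v = rho t a n v" if "v \<in> Pbar_tensor t n" for n v
    by (rule NT_determined[OF \<phi> rho_nat t _ that])
  then show ?thesis using akS by blast
qed

lemma vanish_part:
  assumes st: "s > t" and \<phi>: "is_nat_trans s t \<phi>" and v: "v \<in> Pbar_tensor s n"
  shows "\<phi> n v = (\<lambda>_. 0)"
proof -
  have s: "0 < s" using st by simp
  have "\<phi> (2*s) (gen s) z = 0" for z
  proof (rule ccontr)
    assume "\<phi> (2*s) (gen s) z \<noteq> 0"
    then have "\<forall>i<s. \<exists>k<t. z!k div 2 = i" using collapse[OF \<phi> s] by blast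
    then have "{..<s} \<subseteq> (\<lambda>k. z!k div 2) ` {..<t}" by force
    then have "card {..<s} \<le> card ((\<lambda>k. z!k div 2) ` {..<t})" by (intro card_mono) auto
    also have "\<dots> \<le> card {..<t}" by (rule card_image_le) simp
    finally show False using st by simp
  qed
  then have "\<phi> (2*s) (gen s) = (\<lambda>n v. (\<lambda>_. 0)) (2*s) (gen s)" by auto
  then show ?thesis using NT_determined[OF \<phi> zero_nat s _ v] by simp
qed

theorem mainTheorem2:
  fixes s t :: nat
  shows "(s > t \<longrightarrow>
           (\<forall>\<phi> :: nat \<Rightarrow> (nat list \<Rightarrow> 'k::field) \<Rightarrow> nat list \<Rightarrow> 'k.
              is_nat_trans s t \<phi> \<longrightarrow> (\<forall>n. \<forall>v\<in>Pbar_tensor s n. \<phi> n v = (\<lambda>_. 0))))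
       \<and> (s = t \<longrightarrow>
           (\<forall>a\<in>(kS t :: ((nat \<Rightarrow> nat) \<Rightarrow> 'k) set). is_nat_trans t t (rho t a))
         \<and> (\<forall>a\<in>(kS t :: ((nat \<Rightarrow> nat) \<Rightarrow> 'k) set). \<forall>b\<in>kS t.
              (\<forall>n. \<forall>v\<in>Pbar_tensor t n. rho t a n v = rho t b n v) \<longrightarrow> a = b)
         \<and> (\<forall>\<phi> :: nat \<Rightarrow> (nat list \<Rightarrow> 'k) \<Rightarrow> nat list \<Rightarrow> 'k. is_nat_trans t t \<phi> \<longrightarrow>
              (\<exists>a\<in>kS t. \<forall>n. \<forall>v\<in>Pbar_tensor t n. \<phi> n v = rho t a n v))
         \<and> (\<forall>n. \<forall>v\<in>Pbar_tensor t n. rho t (kS_one :: (nat \<Rightarrow> nat) \<Rightarrow> 'k) n v = v)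
         \<and> (\<forall>a\<in>(kS t :: ((nat \<Rightarrow> nat) \<Rightarrow> 'k) set). \<forall>b\<in>kS t. \<forall>c::'k. \<forall>n. \<forall>v\<in>Pbar_tensor t n.
              rho t (\<lambda>\<sigma>. a \<sigma> + c * b \<sigma>) n v = (\<lambda>ys. rho t a n v ys + c * rho t b n v ys))
         \<and> (\<forall>a\<in>(kS t :: ((nat \<Rightarrow> nat) \<Rightarrow> 'k) set). \<forall>b\<in>kS t. \<forall>n. \<forall>v\<in>Pbar_tensor t n.
              rho t (kS_mult t a b) n v = rho t a n (rho t b n v)))"
  apply (intro conjI impI)
  subgoal using vanish_part by blast
  subgoal using rho_nat by blast
  subgoal using inj_part by blast
  subgoal using surj_part by blast
  subgoal using rho_one by blast
  subgoal using rho_lin by blast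
  subgoal using rho_mult by blast
  done

end
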